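(* Let $H$ be a 0-SYM filter with $H(1)=1$, and suppose $-1$ is a zero of $H$ of multiplicity exactly $2m$, where $m\ge1$. Let $\sigma=\operatorname{sign}(H(i))\in\{+1,-1\}$ and let $\Lambda=\{\lambda_1,\dots,\lambda_r\}$ be the parameter multiset of $H$ defined below. Let $m_0(\xi)=H(e^{-i\xi})$. Then $$m_0'(\tfrac{\pi}{2})=-(2-\sqrt2\,\sigma)\left(m+\sum_{j=1}^r\frac{1}{\eta(\lambda_j)}\right).$$
   Context: A 0-SYM filter is a rational function $H(z)$ with real coefficients satisfying $H(z)^2+H(-z)^2=1$ and $H(z)=H(z^{-1})$. For such $H$ one has $H(i)=\pm1/\sqrt2$. The function $\eta$ is $\eta(z)=\frac{z+z^{-1}}{2}$. The parameter multiset $\Lambda$ is defined as follows. Consider the multiset of solutions $w\ne1$ of $H(w)=1$, each counted with half its multiplicity (these multiplicities are even). This multiset is invariant under $w\mapsto w^{-1}$ and contains no $w$ with $w=w^{-1}$. The multiset $\Lambda$ keeps exactly one element of each reciprocal pair $\{w,w^{-1}\}$. Thus the solutions $w\ne1$ of $H(w)=1$, with multiplicity, are exactly the $\lambda_j$ and $\lambda_j^{-1}$, each counted twice. *)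

theory Defs
  imports "HOL-Analysis.Analysis" "HOL-Computational_Algebra.Polynomial" "HOL-Library.Multiset"
begin

definition rat_eval :: "real poly \<Rightarrow> real poly \<Rightarrow> complex \<Rightarrow> complex" where
  "rat_eval p q z = poly (map_poly complex_of_real p) z / poly (map_poly complex_of_real q) z"

text \<open>0-SYM filter: H(z)^2 + H(-z)^2 = 1 and H(z) = H(1/z) as rational functions,
  i.e. at every point where both sides are defined.\<close>
definition zero_sym_filter :: "real poly \<Rightarrow> real poly \<Rightarrow> bool" where
  "zero_sym_filter p q \<longleftrightarrow> q \<noteq> 0 \<and>
     (\<forall>z. poly (map_poly complex_of_real q) z \<noteq> 0 \<and> poly (map_poly complex_of_real q) (-z) \<noteq> 0 \<longrightarrow>
          (rat_eval p q z)\<^sup>2 + (rat_eval p q (-z))\<^sup>2 = 1) \<and>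
     (\<forall>z. z \<noteq> 0 \<and> poly (map_poly complex_of_real q) z \<noteq> 0 \<and> poly (map_poly complex_of_real q) (1/z) \<noteq> 0 \<longrightarrow>
          rat_eval p q z = rat_eval p q (1/z))"

definition eta :: "complex \<Rightarrow> complex" where
  "eta z = (z + 1/z) / 2"

text \<open>Parameter multiset: for coprime p, q the solutions of H(w)=1 with multiplicity are the
  roots of p - q. Lambda keeps one element of each reciprocal pair, half multiplicity.\<close>
definition is_param_multiset :: "real poly \<Rightarrow> real poly \<Rightarrow> complex multiset \<Rightarrow> bool" where
  "is_param_multiset p q L \<longleftrightarrow> 1 \<notin># L \<and>
     (\<forall>w. count L w = 0 \<or> count L (1/w) = 0) \<and>
     (\<forall>w. w \<noteq> 1 \<longrightarrow> order w (map_poly complex_of_real (p - q)) = 2 * (count L w + count L (1/w)))"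

end

theory Submission
  imports Defs "HOL-Computational_Algebra.Field_as_Ring" "HOL-Computational_Algebra.Polynomial_Factorial"
    "HOL-Computational_Algebra.Fundamental_Theorem_Algebra"
begin

abbreviation cp :: "real poly \<Rightarrow> complex poly" where "cp p \<equiv> map_poly complex_of_real p"

lemma cp_add: "cp (p + q) = cp p + cp q"
  by (rule poly_eqI) (simp add: coeff_map_poly)
lemma cp_diff: "cp (p - q) = cp p - cp q"
  by (rule poly_eqI) (simp add: coeff_map_poly)
lemma cp_mult: "cp (p * q) = cp p * cp q"
  by (rule poly_eqI) (simp add: coeff_map_poly coeff_mult)
lemma cp_power: "cp (p ^ n) = cp p ^ n"
  by (induction n) (simp_all add: cp_mult)
lemma cp_one: "cp 1 = 1" by simp
lemma cp_eq_0 [simp]: "cp p = 0 \<longleftrightarrow> p = 0" by (rule map_poly_eq_0_iff) auto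

lemma aux_eq: "(b::complex) \<noteq> 0 \<Longrightarrow> d \<noteq> 0 \<Longrightarrow> (a/b)^2 + (c/d)^2 = 1 \<Longrightarrow> a^2*d^2 + c^2*b^2 = b^2*d^2"
proof -
  assume b: "b \<noteq> 0" and d: "d \<noteq> 0" and e: "(a/b)^2 + (c/d)^2 = 1"
  define x where "x = a/b"
  define y where "y = c/d"
  have ax: "a = x*b" using b by (simp add: x_def)
  have cy: "c = y*d" using d by (simp add: y_def)
  have "(x*b)^2*d^2 + (y*d)^2*b^2 = (x^2+y^2)*(b^2*d^2)" by algebra
  moreover have "a^2*d^2 + c^2*b^2 = (x*b)^2*d^2 + (y*d)^2*b^2" using ax cy by simp
  moreover have "x^2+y^2 = 1" using e by (simp add: x_def y_def)
  ultimately show ?thesis by simp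
qed

lemma poly_cp_real: "poly (cp p) (complex_of_real x) = complex_of_real (poly p x)"
  by (induction p) (auto simp: map_poly_pCons)

lemma poly_cp_cnj: "poly (cp p) (cnj z) = cnj (poly (cp p) z)"
  by (rule poly_cnj_real[symmetric]) (simp add: coeff_map_poly)

lemma no_common_root:
  assumes "coprime p q" "poly (cp p) z = 0" shows "poly (cp q) z \<noteq> 0"
proof
  assume q0: "poly (cp q) z = 0"
  obtain a b where "bezout_coefficients p q = (a, b)" by (cases "bezout_coefficients p q")
  then have "a * p + b * q = gcd p q" by (rule bezout_coefficients)
  also have "gcd p q = 1" using assms(1) by simp
  finally have "cp (a * p + b * q) = 1" by simp
  then have "poly (cp (a * p + b * q)) z = 1" by simp
  then show False using assms(2) q0 by (simp add: cp_add cp_mult)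
qed

abbreviation negp :: "complex poly \<Rightarrow> complex poly" where "negp P \<equiv> pcompose P [:0,-1:]"

lemma poly_negp: "poly (negp P) z = poly P (-z)"
  by (simp add: poly_pcompose)

lemma negp_negp: "negp (negp P) = P"
proof -
  have "pcompose [:0,-1::complex:] [:0,-1:] = [:0,1:]" by (simp add: pcompose_pCons)
  then show ?thesis by (simp add: pcompose_assoc[symmetric])
qed

lemma negp_eq_0: "negp P = 0 \<longleftrightarrow> P = 0"
  by (metis negp_negp pcompose_0)

lemma pcompose_dvd: "A dvd B \<Longrightarrow> pcompose A r dvd pcompose B r"
  by (metis dvd_def pcompose_mult)

lemma pcompose_power: "pcompose (A ^ n) r = pcompose A r ^ n"
  by (induction n) (simp_all add: pcompose_mult pcompose_1)

lemma order_negp_le: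
  assumes "P \<noteq> 0" shows "order (-a) P \<le> order a (negp P)"
proof -
  define k where "k = order (-a) P"
  have "[:-(-a),1:]^k dvd P" unfolding k_def by (rule order_1)
  then have "pcompose ([:a,1:]^k) [:0,-1:] dvd negp P" by (simp add: pcompose_dvd)
  moreover have "pcompose ([:a,1:]^k) [:0,-1:] = smult ((-1)^k) ([:-a,1:]^k)"
  proof -
    have "pcompose [:a,1:] [:0,-1:] = smult (-1) [:-a,1:]" by (simp add: pcompose_pCons)
    then show ?thesis by (simp only: pcompose_power smult_power)
  qed
  ultimately have "smult ((-1)^k) ([:-a,1:]^k) dvd negp P" by simp
  then have "[:-a,1:]^k dvd negp P"
    by (simp add: smult_dvd_iff)
  then show ?thesis using assms negp_eq_0 by (auto simp: order_divides k_def)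
qed

lemma order_negp: assumes False: "P \<noteq> 0" shows "order a (negp P) = order (-a) P"
proof -
  have "order (-(-a)) (negp P) \<le> order (-a) (negp (negp P))"
    by (rule order_negp_le) (use False negp_eq_0 in auto)
  then show ?thesis using order_negp_le[OF False, of a] by (simp add: negp_negp)
qed

lemma map_cnj_mult: "map_poly cnj (A * B) = map_poly cnj A * map_poly cnj B"
  by (simp add: poly_eq_poly_eq_iff[symmetric] fun_eq_iff)

lemma map_cnj_power: "map_poly cnj (A ^ n) = map_poly cnj A ^ n"
  by (induction n) (simp_all add: map_cnj_mult)

lemma map_cnj_dvd: "A dvd B \<Longrightarrow> map_poly cnj A dvd map_poly cnj B"
  by (metis dvd_def map_cnj_mult)

lemma order_cnj_le:
  assumes "P \<noteq> 0" "map_poly cnj P = P" shows "order a P \<le> order (cnj a) P"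
proof -
  define k where "k = order a P"
  have "[:-a,1:]^k dvd P" unfolding k_def by (rule order_1)
  then have "map_poly cnj ([:-a,1:]^k) dvd map_poly cnj P" by (rule map_cnj_dvd)
  moreover have "map_poly cnj ([:-a,1:]^k) = [:-cnj a,1:]^k"
    by (simp add: map_cnj_power map_poly_pCons)
  ultimately have "[:-cnj a,1:]^k dvd P" using assms by simp
  then show ?thesis using assms by (auto simp: order_divides k_def)
qed

lemma order_cnj:
  assumes False: "P \<noteq> 0" and "map_poly cnj P = P" shows "order (cnj a) P = order a P"
proof -
  show ?thesis using order_cnj_le[OF False assms(2), of a] order_cnj_le[OF False assms(2), of "cnj a"] by simp
qed

lemma cp_cnj: "map_poly cnj (cp p) = cp p"
  by (rule poly_eqI) (simp add: coeff_map_poly)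

lemma logderiv_prod:
  fixes z :: complex
  assumes "\<forall>x\<in>#R. x \<noteq> z"
  shows "poly (pderiv (\<Prod>x\<in>#R. [:-x,1:])) z = poly (\<Prod>x\<in>#R. [:-x,1:]) z * (\<Sum>x\<in>#R. 1/(z-x))"
  using assms
proof (induction R)
  case empty then show ?case by simp
next
  case (add a R)
  have "a \<noteq> z" using add.prems by simp
  then have ne: "z - a \<noteq> 0" by (metis right_minus_eq)
  have IH: "poly (pderiv (\<Prod>x\<in>#R. [:-x,1:])) z = poly (\<Prod>x\<in>#R. [:-x,1:]) z * (\<Sum>x\<in>#R. 1/(z-x))"
    using add by auto
  define PR where "PR = (\<Prod>x\<in>#R. [:-x,1:])"
  have e: "(\<Prod>x\<in>#add_mset a R. [:-x,1:]) = [:-a,1:] * PR" by (simp add: PR_def)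
  have d: "pderiv ([:-a,1:] * PR) = PR + [:-a,1:] * pderiv PR"
    by (simp only: pderiv_mult) (simp add: pderiv_pCons)
  show ?case unfolding e d using ne IH unfolding PR_def[symmetric]
    by (simp add: field_simps)
qed

lemma logderiv_complex:
  fixes F :: "complex poly"
  assumes "poly F z \<noteq> 0"
  shows "poly (pderiv F) z = poly F z * (\<Sum>x\<in>#proots F. 1/(z-x))"
proof -
  have F0: "F \<noteq> 0" using assms by auto
  have "\<forall>x\<in>#proots F. x \<noteq> z" using assms F0 by auto
  note L = logderiv_prod[OF this]
  have "pderiv F = smult (lead_coeff F) (pderiv (\<Prod>x\<in>#proots F. [:-x,1:]))"
    by (subst (1) complex_poly_decompose_multiset[symmetric]) (simp add: pderiv_smult)
  moreover have "poly F z = lead_coeff F * poly (\<Prod>x\<in>#proots F. [:-x,1:]) z"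
    by (subst (1) complex_poly_decompose_multiset[symmetric]) simp
  ultimately show ?thesis using L by simp
qed

locale cor =
  fixes p q :: "real poly" and m :: nat and L :: "complex multiset"
  assumes zs: "zero_sym_filter p q" and cop: "coprime p q" and q1: "poly q 1 \<noteq> 0"
    and H1: "rat_eval p q 1 = 1" and m1: "m \<ge> 1" and ordm: "order (-1) p = 2*m"
    and par: "is_param_multiset p q L"
begin

abbreviation "P \<equiv> cp p"
abbreviation "Q \<equiv> cp q"
abbreviation "H \<equiv> rat_eval p q"

lemma Hdef: "H z = poly P z / poly Q z" by (simp add: rat_eval_def)

lemma q0: "q \<noteq> 0" using zs by (simp add: zero_sym_filter_def)
lemma Q0: "Q \<noteq> 0" using q0 cp_eq_0[of q] by blast

lemma Q1: "poly Q 1 \<noteq> 0" using poly_cp_real[of q 1] q1 by simp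
lemma PQ1: "poly P 1 = poly Q 1" using H1 Q1 by (simp add: Hdef)
lemma p0: "p \<noteq> 0" using PQ1 Q1 by auto
lemma P0: "P \<noteq> 0" using p0 cp_eq_0[of p] by blast

lemma ordP: "order (-1) P = 2*m"
proof -
  obtain g where g: "p = [:-(-1), 1:] ^ order (-1) p * g" "\<not> [:-(-1), 1:] dvd g"
    using order_decomp[OF p0] by blast
  have g0: "poly g (-1) \<noteq> 0" using g(2) by (simp add: poly_eq_0_iff_dvd)
  have c11: "cp [:1,1:] = [:1,1:]" by (simp add: map_poly_pCons)
  have "P = cp ([:1,1:] ^ (2*m) * g)" using g(1) ordm by simp
  then have "P = [:1,1:] ^ (2*m) * cp g" by (simp only: cp_mult cp_power c11)
  moreover have "poly (cp g) (-1) \<noteq> 0" using poly_cp_real[of g "-1"] g0 by simp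
  moreover have "cp g \<noteq> 0" using calculation(2) by auto
  ultimately show ?thesis
    using order_power_n_n[of "-1::complex" "2*m"]
    by (simp add: order_mult order_0I)
qed

lemma Pm1: "poly P (-1) = 0" using ordP m1 P0 by (simp add: order_root)
lemma Qm1: "poly Q (-1) \<noteq> 0" using no_common_root[OF cop Pm1] .

lemma symm: "poly Q z \<noteq> 0 \<Longrightarrow> poly Q (-z) \<noteq> 0 \<Longrightarrow> (H z)^2 + (H (-z))^2 = 1"
  using zs by (simp add: zero_sym_filter_def)

lemma recip: "z \<noteq> 0 \<Longrightarrow> poly Q z \<noteq> 0 \<Longrightarrow> poly Q (1/z) \<noteq> 0 \<Longrightarrow> H z = H (1/z)"
  using zs unfolding zero_sym_filter_def by blast

lemma ident: "P^2 * (negp Q)^2 + (negp P)^2 * Q^2 = Q^2 * (negp Q)^2"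
proof -
  define E where "E = P^2 * (negp Q)^2 + (negp P)^2 * Q^2 - Q^2 * (negp Q)^2"
  have QQ: "Q * negp Q \<noteq> 0" using Q0 negp_eq_0 by auto
  have "\<forall>z. poly E z = 0 \<or> poly (Q * negp Q) z = 0"
  proof
    fix z
    show "poly E z = 0 \<or> poly (Q * negp Q) z = 0"
    proof (cases "poly (Q * negp Q) z = 0")
      case False
      then have a: "poly Q z \<noteq> 0" "poly Q (-z) \<noteq> 0" by (auto simp: poly_negp)
      from symm[OF a] have "(poly P z / poly Q z)^2 + (poly P (-z) / poly Q (-z))^2 = 1"
        by (simp add: Hdef)
      then have "poly P z ^2 * poly Q (-z) ^2 + poly P (-z) ^2 * poly Q z ^2 = poly Q z ^2 * poly Q (-z) ^2"
        by (rule aux_eq[OF a])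
      then have "poly E z = 0" 
        by (simp add: E_def poly_negp)
      then show ?thesis by simp
    qed simp
  qed
  then have U: "UNIV = {z. poly E z = 0} \<union> {z. poly (Q * negp Q) z = 0}" by auto
  show ?thesis
  proof (rule ccontr)
    assume "\<not> ?thesis"
    then have "E \<noteq> 0" by (simp add: E_def)
    then have "finite (UNIV :: complex set)" using U poly_roots_finite QQ
      by (metis finite_UnI)
    then show False by (simp add: infinite_UNIV_char_0)
  qed
qed

end

context cor
begin

lemma real_circle:
  assumes z1: "cmod z = 1" and Qz: "poly Q z \<noteq> 0"
  shows "H z \<in> \<real>"
proof -
  have z0: "z \<noteq> 0" using z1 by auto
  have "z * cnj z = 1" using complex_norm_square[of z] z1 by simp
  then have zc: "1/z = cnj z" using z0 by (simp add: field_simps)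
  have Qc: "poly Q (1/z) \<noteq> 0" unfolding zc poly_cp_cnj using Qz by simp
  have "H z = H (1/z)" by (rule recip[OF z0 Qz Qc])
  also have "\<dots> = cnj (H z)" unfolding zc Hdef poly_cp_cnj by simp
  finally show ?thesis by (simp add: Reals_cnj_iff)
qed

lemma bound_circle:
  assumes z1: "cmod z = 1" and a: "poly Q z \<noteq> 0" "poly Q (-z) \<noteq> 0"
  shows "cmod (poly P z) \<le> cmod (poly Q z)"
proof -
  obtain x where x: "H z = of_real x" using real_circle[OF z1 a(1)] by (auto elim: Reals_cases)
  obtain y where y: "H (-z) = of_real y" using real_circle[of "-z"] z1 a(2) by (auto elim: Reals_cases)
  have "of_real (x^2 + y^2) = (1::complex)" using symm[OF a] x y by simp
  then have "x^2 + y^2 = 1" using of_real_eq_1_iff by blast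
  then have "x^2 \<le> 1" by (smt (verit) zero_le_power2)
  then have "\<bar>x\<bar> \<le> 1" by (simp add: abs_square_le_1)
  then have "cmod (H z) \<le> 1" using x by simp
  then have "cmod (poly P z) / cmod (poly Q z) \<le> 1" by (simp add: Hdef norm_divide)
  then show ?thesis using a(1) by (simp add: divide_le_eq_1)
qed

lemma Qi: "poly Q \<i> \<noteq> 0"
proof
  assume Qi0: "poly Q \<i> = 0"
  have Pi: "poly P \<i> \<noteq> 0" using no_common_root[OF cop] Qi0 by blast
  define f where "f \<theta> = cmod (poly Q (cis \<theta>)) - cmod (poly P (cis \<theta>))" for \<theta>
  have fc: "isCont f (pi/2)" unfolding f_def cis_conv_exp by (intro continuous_intros)
  have fneg: "f (pi/2) < 0" using Pi Qi0 by (simp add: f_def)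
  have r: "- f (pi/2) > 0" using fneg by simp
  have "\<forall>r>0. \<exists>s>0. \<forall>x. x \<noteq> pi/2 \<and> norm (x - pi/2) < s \<longrightarrow> norm (f x - f (pi/2)) < r"
    using fc by (simp only: isCont_def LIM_eq)
  then have "\<exists>s>0. \<forall>x. x \<noteq> pi/2 \<and> norm (x - pi/2) < s \<longrightarrow> norm (f x - f (pi/2)) < - f (pi/2)"
    using r by blast
  then obtain d where d: "d > 0" "\<And>x. x \<noteq> pi/2 \<Longrightarrow> norm (x - pi/2) < d \<Longrightarrow> norm (f x - f (pi/2)) < - f (pi/2)"
    by blast
  define d' where "d' = min d (pi/2)"
  have d'0: "d' > 0" using d(1) by (simp add: d'_def)
  define I where "I = {pi/2 - d' <..< pi/2 + d'}"
  define Z where "Z = {z. poly Q z = 0} \<union> {z. poly (negp Q) z = 0}"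
  have finZ: "finite Z" unfolding Z_def using Q0 negp_eq_0 poly_roots_finite by blast
  have sub: "cis ` I \<subseteq> Z"
  proof
    fix w assume "w \<in> cis ` I"
    then obtain x where x: "x \<in> I" "w = cis x" by auto
    have "f x < 0"
    proof (cases "x = pi/2")
      case True then show ?thesis using fneg by (simp only:)
    next
      case False
      have "norm (x - pi/2) < d" using x(1) by (auto simp: I_def d'_def)
      then have "norm (f x - f (pi/2)) < - f (pi/2)" using d(2) False by blast
      then show ?thesis by simp
    qed
    then have "\<not> (poly Q w \<noteq> 0 \<and> poly Q (-w) \<noteq> 0)"
      using bound_circle[of w] x(2) by (auto simp: f_def)
    then show "w \<in> Z" by (auto simp: Z_def poly_negp)
  qed
  have inj: "inj_on cis I"
  proof (rule inj_onI)
    fix x y assume "x \<in> I" "y \<in> I" "cis x = cis y"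
    then have "Re (cis x) = Re (cis y)" by simp
    then have "cos x = cos y" by simp
    moreover have "0 \<le> x" "x \<le> pi" "0 \<le> y" "y \<le> pi"
      using \<open>x \<in> I\<close> \<open>y \<in> I\<close> by (auto simp: I_def d'_def)
    ultimately show "x = y" using cos_inj_pi by blast
  qed
  have "finite (cis ` I)" using finZ sub finite_subset by blast
  then have "finite I" using inj finite_image_iff by blast
  moreover have "pi/2 - d' < pi/2 + d'" using d'0 by simp
  ultimately show False using infinite_Ioo unfolding I_def by blast
qed

lemma Qmi: "poly Q (-\<i>) \<noteq> 0"
  using Qi poly_cp_cnj[of q \<i>] by simp

lemma Hi: "H (-\<i>) = H \<i>"
proof -
  have "H \<i> = H (1/\<i>)" by (rule recip) (use Qi Qmi in auto)
  then show ?thesis by simp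
qed

definition h where "h = Re (H (-\<i>))"

lemma h_real: "H (-\<i>) = of_real h"
proof -
  have "H (-\<i>) \<in> \<real>" by (rule real_circle) (use Qmi in auto)
  then show ?thesis by (simp add: h_def complex_eq_iff complex_is_Real_iff)
qed

lemma h_sq: "h^2 = 1/2"
proof -
  have "(H (-\<i>))^2 + (H (-(-\<i>)))^2 = 1" by (rule symm) (use Qi Qmi in auto)
  then have "2 * (H (-\<i>))^2 = 1" using Hi by simp
  then have "of_real (2 * h^2) = (1::complex)" using h_real by simp
  then have "2 * h^2 = 1" by (simp only: of_real_eq_1_iff)
  then show ?thesis by simp
qed

lemma sgn_eq: "sgn (Re (H \<i>)) = sgn h"
  using Hi by (simp add: h_def)

lemma h_val: "h = sgn h * (sqrt 2 / 2)"
proof -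
  have "\<bar>h\<bar> = sqrt (h^2)" by simp
  also have "\<dots> = sqrt (1/2)" by (simp only: h_sq)
  also have "\<dots> = 1 / sqrt 2" by (simp add: real_sqrt_divide)
  also have "\<dots> = sqrt 2 / 2" by (simp add: divide_simps)
  finally have "\<bar>h\<bar> = sqrt 2 / 2" .
  moreover have "h = sgn h * \<bar>h\<bar>" by (simp add: sgn_mult_abs)
  ultimately show ?thesis by metis
qed

lemma h_ne1: "h \<noteq> 1"
proof
  assume "h = 1" then show False using h_sq by simp
qed

end

lemma id1: fixes l :: complex assumes "l \<noteq> 0" "l \<noteq> \<i>" "l \<noteq> -\<i>"
  shows "1/(-\<i> - l) + 1/(-\<i> - inverse l) = \<i> - 1/eta l"
proof -
  have u: "l - \<i> \<noteq> 0" using assms(2) by simp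
  have v: "l + \<i> \<noteq> 0"
  proof
    assume "l + \<i> = 0" then have "l = -\<i>" by (simp add: eq_neg_iff_add_eq_0)
    then show False using assms(3) by simp
  qed
  have uv: "(l - \<i>) * (l + \<i>) = l^2 + 1" by (simp add: algebra_simps power2_eq_square)
  have a: "l^2 + 1 \<noteq> 0" using u v uv[symmetric] by simp
  have b: "-\<i> - l \<noteq> 0"
  proof
    assume "-\<i> - l = 0" then have "l = -\<i>" by (simp add: algebra_simps)
    then show False using assms(3) by simp
  qed
  have c: "-\<i> * l - 1 \<noteq> 0" 
  proof
    assume "-\<i> * l - 1 = 0" then have "\<i> * (-\<i> * l - 1) = 0" by simp
    then have "l - \<i> = 0" by (simp add: algebra_simps)
    then show False using assms by simp
  qed
  have d: "\<i> + \<i> * (l*l) \<noteq> 0" using a by (metis complex_i_not_zero distrib_left mult.right_neutral mult_eq_0_iff power2_eq_square add.commute) 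
  have e: "-\<i> - inverse l = (-\<i>*l - 1)/l" using assms(1) by (simp add: field_simps)
  have "1/(-\<i> - l) + 1/(-\<i> - inverse l) = 1/(-\<i> - l) + l/(-\<i>*l - 1)"
    unfolding e by simp
  also have "\<dots> = \<i> - 2*l/(l^2+1)"
    using a b c d by (simp add: field_simps power2_eq_square)
  finally have X: "1/(-\<i> - l) + 1/(-\<i> - inverse l) = \<i> - 2*l/(l^2+1)" .
  have "(l^2+1)/l = l + 1/l" using assms(1) by (simp add: add_divide_distrib power2_eq_square)
  then have "eta l = ((l^2+1)/l)/2" by (simp only: eta_def)
  then have "eta l = (l^2+1)/(2*l)" by (simp add: mult.commute)
  then have "2*l/(l^2+1) = 1/eta l" by simp
  then show ?thesis using X by simp
qed

lemma id2: fixes x :: complex assumes "x \<noteq> \<i>" "x \<noteq> -\<i>"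
  shows "1/(-\<i> - x) + 1/(-\<i> + x) = 2 * \<i> / (1 + x^2)"
proof -
  have b: "-\<i> - x \<noteq> 0"
  proof
    assume "-\<i> - x = 0" then have "x = -\<i>" by (simp add: algebra_simps)
    then show False using assms by simp
  qed
  have c: "-\<i> + x \<noteq> 0"
  proof
    assume "-\<i> + x = 0" then have "x = \<i>" by (simp add: algebra_simps)
    then show False using assms by simp
  qed
  have a: "1 + x^2 \<noteq> 0"
  proof
    assume h: "1 + x^2 = 0"
    have "(-\<i> - x) * (-\<i> + x) = - (1 + x^2)" by (simp add: algebra_simps power2_eq_square)
    then have "(-\<i> - x) * (-\<i> + x) = 0" using h by (simp only: neg_equal_0_iff_equal)
    then show False using b c by simp
  qed
  have pr: "(-\<i> - x) * (-\<i> + x) = - (1 + x^2)" by (simp add: algebra_simps power2_eq_square)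
  have "1/(-\<i> - x) + 1/(-\<i> + x) = (1 * (-\<i> + x) + 1 * (-\<i> - x)) / ((-\<i> - x) * (-\<i> + x))"
    using b c by (rule add_frac_eq)
  also have "\<dots> = (- (2*\<i>)) / (- (1 + x^2))"
  proof -
    have num: "(-\<i> + x) + (-\<i> - x) = - (2*\<i>)" by algebra
    show ?thesis unfolding pr mult_1_left num by (rule refl)
  qed
  also have "\<dots> = 2 * \<i> / (1 + x^2)" by (rule minus_divide_divide)
  finally show ?thesis .
qed


lemma count_invol:
  assumes "\<And>x. f (f x) = x"
  shows "count (image_mset f M) x = count M (f x)"
proof -
  have pre: "f -` {x} = {f x}"
  proof (rule set_eqI)
    fix y
    show "y \<in> f -` {x} \<longleftrightarrow> y \<in> {f x}"
    proof
      assume "y \<in> f -` {x}" then have "f y = x" by simp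
      then have "f (f y) = f x" by simp
      then show "y \<in> {f x}" using assms by simp
    next
      assume "y \<in> {f x}" then have "y = f x" by simp
      then show "y \<in> f -` {x}" using assms by simp
    qed
  qed
  show ?thesis
  proof (cases "f x \<in># M")
    case True then show ?thesis by (simp add: count_image_mset pre)
  next
    case False
    then have "{f x} \<inter> set_mset M = {}" by auto
    then show ?thesis using False by (simp add: count_image_mset pre not_in_iff)
  qed
qed


lemma cnj_sum_mset: "cnj (\<Sum>x\<in>#M. f x) = (\<Sum>x\<in>#M. cnj (f x))"
  by (induction M) simp_all


lemma eta_inv: "eta (inverse l) = eta l"
  unfolding eta_def inverse_eq_divide by (simp add: ac_simps)


lemma eta_cnj: "cnj (1 / eta x) = 1 / eta (cnj x)"
  unfolding eta_def by (simp only: complex_cnj_divide complex_cnj_add complex_cnj_one complex_cnj_numeral)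

lemma order_sq: "X \<noteq> 0 \<Longrightarrow> order a (X^2) = 2 * order a X"
  by (simp add: power2_eq_square order_mult)

context cor
begin

definition Dp where "Dp = P - Q"
lemma Dp_cp: "Dp = cp (p - q)" by (simp add: Dp_def cp_diff)
lemma Dp_real: "map_poly cnj Dp = Dp" unfolding Dp_cp by (rule cp_cnj)
lemma poly_Dp_cnj: "poly Dp (cnj z) = cnj (poly Dp z)" unfolding Dp_cp by (rule poly_cp_cnj)

lemma Dz0: "poly Dp (-\<i>) \<noteq> 0"
proof -
  have "poly P (-\<i>) / poly Q (-\<i>) = of_real h" using h_real by (simp add: Hdef)
  then have e: "poly P (-\<i>) = of_real h * poly Q (-\<i>)" using Qmi by (simp add: divide_eq_eq)
  have "poly Dp (-\<i>) = (of_real h - 1) * poly Q (-\<i>)" by (simp add: Dp_def e algebra_simps)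
  moreover have "(of_real h - 1 :: complex) \<noteq> 0" using h_ne1 by simp
  ultimately show ?thesis using Qmi by simp
qed

lemma Di: "poly Dp \<i> \<noteq> 0" using Dz0 poly_Dp_cnj[of "-\<i>"] by simp
lemma Dp0: "Dp \<noteq> 0" using Dz0 by auto

lemma Qm0: "negp Q \<noteq> 0" using Q0 negp_eq_0 by blast
lemma Pm0: "negp P \<noteq> 0" using P0 negp_eq_0 by blast

lemma ident2: "(negp Q)^2 * ((Q - P) * (Q + P)) = (negp P)^2 * Q^2"
proof -
  have "(negp Q)^2 * ((Q - P) * (Q + P)) = Q^2 * (negp Q)^2 - P^2 * (negp Q)^2"
    by (simp add: algebra_simps power2_eq_square)
  also have "\<dots> = (negp P)^2 * Q^2" unfolding ident[symmetric] by simp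
  finally show ?thesis .
qed

lemma RHS0: "(negp P)^2 * Q^2 \<noteq> 0" using Pm0 Q0 by simp

lemma ord1: "order 1 Dp = 4*m"
proof -
  have A1: "poly ((negp Q)^2) 1 \<noteq> 0" using Qm1 by (simp add: poly_negp)
  have C1: "poly (Q + P) 1 \<noteq> 0" using PQ1 Q1 by simp
  have nz: "(negp Q)^2 * ((Q - P) * (Q + P)) \<noteq> 0" using ident2 RHS0 by simp
  then have nz2: "(Q - P) * (Q + P) \<noteq> 0" by auto
  have "order 1 ((negp Q)^2 * ((Q - P) * (Q + P))) = order 1 ((negp Q)^2) + (order 1 (Q - P) + order 1 (Q + P))"
    using nz nz2 by (simp add: order_mult)
  also have "\<dots> = order 1 (Q - P)" using A1 C1 by (simp add: order_0I)
  also have "\<dots> = order 1 Dp"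
  proof -
    have "Q - P = - Dp" by (simp add: Dp_def)
    then show ?thesis by (simp only: order_uminus)
  qed
  finally have l: "order 1 ((negp Q)^2 * ((Q - P) * (Q + P))) = order 1 Dp" .
  have "order 1 ((negp P)^2 * Q^2) = order 1 ((negp P)^2) + order 1 (Q^2)"
    using RHS0 by (simp add: order_mult)
  also have "\<dots> = 2 * order 1 (negp P) + 2 * order 1 Q" using Pm0 Q0 by (simp add: order_sq)
  also have "\<dots> = 4 * m" using ordP Q1 by (simp add: order_negp[OF P0] order_0I)
  finally show ?thesis using l ident2 by simp
qed

lemma ordQ_le:
  assumes "order s Q > 0" shows "order s Q \<le> order (-s) Q"
proof -
  have Qs: "poly Q s = 0" using assms Q0 order_gt_0_iff by blast
  have Ps: "poly P s \<noteq> 0" using no_common_root[OF cop] Qs by blast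
  have nz: "(negp Q)^2 * ((Q - P) * (Q + P)) \<noteq> 0" using ident2 RHS0 by simp
  then have nz2: "(Q - P) * (Q + P) \<noteq> 0" by auto
  have "order s ((negp Q)^2 * ((Q - P) * (Q + P))) = order s ((negp Q)^2) + (order s (Q - P) + order s (Q + P))"
    using nz nz2 by (simp add: order_mult)
  also have "\<dots> = order s ((negp Q)^2)" using Qs Ps by (simp add: order_0I)
  also have "\<dots> = 2 * order (-s) Q" using Qm0 by (simp add: order_sq order_negp[OF Q0])
  finally have l: "order s ((negp Q)^2 * ((Q - P) * (Q + P))) = 2 * order (-s) Q" .
  have "order s ((negp P)^2 * Q^2) = order s ((negp P)^2) + order s (Q^2)"
    using RHS0 by (simp add: order_mult)
  also have "\<dots> = 2 * order s (negp P) + 2 * order s Q" using Pm0 Q0 by (simp add: order_sq)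
  finally have r: "order s ((negp P)^2 * Q^2) = 2 * order s (negp P) + 2 * order s Q" .
  show ?thesis using l r ident2 by simp
qed

lemma ordQ_neg: "order (-s) Q = order s Q"
proof (cases "order s Q > 0")
  case True
  then have a: "order s Q \<le> order (-s) Q" by (rule ordQ_le)
  then have "order (-s) Q > 0" using True by simp
  then have "order (-s) Q \<le> order (-(-s)) Q" by (rule ordQ_le)
  then show ?thesis using a by simp
next
  case False
  show ?thesis
  proof (rule ccontr)
    assume "order (-s) Q \<noteq> order s Q"
    then have "order (-s) Q > 0" using False by simp
    then have "order (-s) Q \<le> order (-(-s)) Q" by (rule ordQ_le)
    then show False using False \<open>order (-s) Q > 0\<close> by simp
  qed
qed

end

lemma sum_R_gen:
  fixes g :: "complex \<Rightarrow> complex"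
  shows "(\<Sum>x\<in>#(replicate_mset k a + L + L + image_mset inverse L + image_mset inverse L). g x)
        = of_nat k * g a + 2 * (\<Sum>l\<in>#L. g l + g (inverse l))"
  by (simp add: sum_mset.distrib multiset.map_comp o_def)

lemma sum_diff_const: "(\<Sum>x\<in>#M. (a::complex) - f x) = of_nat (size M) * a - (\<Sum>x\<in>#M. f x)"
  by (induction M) (simp_all add: algebra_simps)

lemma Re_sum_mset: "Re (\<Sum>x\<in>#M. f x) = (\<Sum>x\<in>#M. Re (f x))"
  by (induction M) simp_all

lemma Im_sum_mset: "Im (\<Sum>x\<in>#M. f x) = (\<Sum>x\<in>#M. Im (f x))"
  by (induction M) simp_all

lemma sum_mset_image: "(\<Sum>x\<in>#image_mset f M. g x) = (\<Sum>x\<in>#M. g (f x))"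
  by (simp add: multiset.map_comp o_def)

lemma four_m: "4 * of_nat m / (-\<i> - 1) = - 2 * of_nat m + 2 * of_nat m * \<i>"
proof -
  have nz: "-\<i> - 1 \<noteq> 0" by (simp add: complex_eq_iff)
  have "(- 2 * of_nat m + 2 * of_nat m * \<i>) * (-\<i> - 1) = 4 * (of_nat m :: complex)"
    by (simp add: algebra_simps)
  then show ?thesis using nz by (simp add: divide_eq_eq)
qed

context cor
begin

lemma L1: "1 \<notin># L" using par by (simp add: is_param_multiset_def)
lemma L0: "0 \<notin># L"
proof -
  have "\<forall>w. count L w = 0 \<or> count L (1/w) = 0" using par by (simp add: is_param_multiset_def)
  then have "count L 0 = 0 \<or> count L (1/(0::complex)) = 0" by (rule spec)
  then show ?thesis by (simp add: not_in_iff)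
qed
lemma Lord: assumes "w \<noteq> 1" shows "order w Dp = 2 * (count L w + count L (inverse w))"
proof -
  have "order w (cp (p - q)) = 2 * (count L w + count L (1/w))"
    using par assms unfolding is_param_multiset_def by blast
  then show ?thesis by (simp add: Dp_cp inverse_eq_divide)
qed

definition R where "R = proots Dp"

lemma R_eq: "R = replicate_mset (4*m) 1 + L + L + image_mset inverse L + image_mset inverse L"
proof (rule multiset_eqI)
  fix w
  have cR: "count R w = order w Dp" using Dp0 by (simp add: R_def)
  have ci: "count (image_mset inverse L) w = count L (inverse w)"
    by (rule count_invol) simp
  show "count R w = count (replicate_mset (4*m) 1 + L + L + image_mset inverse L + image_mset inverse L) w"
  proof (cases "w = 1")
    case True
    then show ?thesis using cR ci ord1 L1 by (simp add: not_in_iff)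
  next
    case False
    then show ?thesis using cR ci Lord[OF False] by simp
  qed
qed

lemma L_mem: assumes "l \<in># L" shows "l \<noteq> 0" "l \<noteq> \<i>" "l \<noteq> -\<i>"
proof -
  show "l \<noteq> 0" using assms L0 by auto
  have "l \<noteq> 1" using assms L1 by auto
  then have "order l Dp > 0" using Lord[of l] assms by (simp add: not_in_iff)
  then have "poly Dp l = 0" using Dp0 order_gt_0_iff by blast
  then show "l \<noteq> \<i>" "l \<noteq> -\<i>" using Di Dz0 by auto
qed

definition S where "S = (\<Sum>l\<in>#L. 1 / eta l)"

lemma SD: "(\<Sum>x\<in>#R. 1/(-\<i> - x)) = - 2 * of_nat m + 2 * of_nat m * \<i> + 2 * (of_nat (size L) * \<i> - S)"
proof -
  have "(\<Sum>x\<in>#R. 1/(-\<i> - x)) = of_nat (4*m) * (1/(-\<i> - 1)) + 2 * (\<Sum>l\<in>#L. 1/(-\<i> - l) + 1/(-\<i> - inverse l))"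
    unfolding R_eq by (rule sum_R_gen)
  also have "(\<Sum>l\<in>#L. 1/(-\<i> - l) + 1/(-\<i> - inverse l)) = (\<Sum>l\<in>#L. \<i> - 1/eta l)"
    by (rule arg_cong[where f = sum_mset], rule image_mset_cong) (use L_mem id1 in blast)
  also have "\<dots> = of_nat (size L) * \<i> - S" by (simp add: sum_diff_const S_def)
  also have "of_nat (4*m) * (1/(-\<i> - 1)) = 4 * of_nat m / (-\<i> - 1)" by simp
  also have "\<dots> = - 2 * of_nat m + 2 * of_nat m * \<i>" by (rule four_m)
  finally show ?thesis .
qed

lemma R_cnj: "image_mset cnj R = R"
proof (rule multiset_eqI)
  fix x
  have "count (image_mset cnj R) x = count R (cnj x)" by (rule count_invol) simp
  also have "\<dots> = order (cnj x) Dp" using Dp0 by (simp add: R_def)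
  also have "\<dots> = order x Dp" by (rule order_cnj[OF Dp0 Dp_real])
  also have "\<dots> = count R x" using Dp0 by (simp add: R_def)
  finally show "count (image_mset cnj R) x = count R x" .
qed

lemma sum_R_eta: "(\<Sum>x\<in>#R. 1/eta x) = 4 * of_nat m + 4 * S"
proof -
  have "(\<Sum>x\<in>#R. 1/eta x) = of_nat (4*m) * (1/eta 1) + 2 * (\<Sum>l\<in>#L. 1/eta l + 1/eta (inverse l))"
    unfolding R_eq by (rule sum_R_gen)
  also have "(\<Sum>l\<in>#L. 1/eta l + 1/eta (inverse l)) = 2 * S"
    by (simp add: eta_inv S_def sum_mset.distrib sum_mset_distrib_left)
  also have "eta 1 = 1" by (simp add: eta_def)
  finally show ?thesis by simp
qed

lemma S_real: "Im S = 0"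
proof -
  have "cnj (\<Sum>x\<in>#R. 1/eta x) = (\<Sum>x\<in>#R. cnj (1/eta x))" by (rule cnj_sum_mset)
  also have "\<dots> = (\<Sum>x\<in>#R. 1/eta (cnj x))" by (simp only: eta_cnj)
  also have "\<dots> = (\<Sum>x\<in>#image_mset cnj R. 1/eta x)" by (simp only: sum_mset_image)
  also have "\<dots> = (\<Sum>x\<in>#R. 1/eta x)" by (simp only: R_cnj)
  finally have "cnj (4 * of_nat m + 4 * S) = 4 * of_nat m + 4 * S" by (simp only: sum_R_eta)
  then have "Im (4 * of_nat m + 4 * S) = 0" by (metis Reals_cnj_iff complex_is_Real_iff)
  then show ?thesis by simp
qed

definition RQ where "RQ = proots Q"

lemma RQ_neg: "image_mset uminus RQ = RQ"
proof (rule multiset_eqI)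
  fix x
  have "count (image_mset uminus RQ) x = count RQ (-x)" by (rule count_invol) simp
  also have "\<dots> = order (-x) Q" using Q0 by (simp add: RQ_def)
  also have "\<dots> = order x Q" by (rule ordQ_neg)
  also have "\<dots> = count RQ x" using Q0 by (simp add: RQ_def)
  finally show "count (image_mset uminus RQ) x = count RQ x" .
qed

lemma RQ_cnj: "image_mset cnj RQ = RQ"
proof (rule multiset_eqI)
  fix x
  have "count (image_mset cnj RQ) x = count RQ (cnj x)" by (rule count_invol) simp
  also have "\<dots> = order (cnj x) Q" using Q0 by (simp add: RQ_def)
  also have "\<dots> = order x Q" by (rule order_cnj[OF Q0 cp_cnj])
  also have "\<dots> = count RQ x" using Q0 by (simp add: RQ_def)
  finally show "count (image_mset cnj RQ) x = count RQ x" .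
qed

lemma RQ_mem: "x \<in># RQ \<Longrightarrow> x \<noteq> \<i> \<and> x \<noteq> -\<i>"
  using Q0 Qi Qmi by (auto simp: RQ_def)

lemma SQ: "Re (\<Sum>x\<in>#RQ. 1/(-\<i> - x)) = 0"
proof -
  define W where "W = (\<Sum>x\<in>#RQ. 1/(1 + x^2))"
  have "(\<Sum>x\<in>#RQ. 1/(-\<i> - x)) = (\<Sum>x\<in>#image_mset uminus RQ. 1/(-\<i> - x))" by (simp only: RQ_neg)
  also have "\<dots> = (\<Sum>x\<in>#RQ. 1/(-\<i> + x))" by (simp add: sum_mset_image)
  finally have e: "(\<Sum>x\<in>#RQ. 1/(-\<i> - x)) = (\<Sum>x\<in>#RQ. 1/(-\<i> + x))" .
  have "2 * (\<Sum>x\<in>#RQ. 1/(-\<i> - x)) = (\<Sum>x\<in>#RQ. 1/(-\<i> - x)) + (\<Sum>x\<in>#RQ. 1/(-\<i> + x))"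
    using e by simp
  also have "\<dots> = (\<Sum>x\<in>#RQ. 1/(-\<i> - x) + 1/(-\<i> + x))" by (simp add: sum_mset.distrib)
  also have "\<dots> = (\<Sum>x\<in>#RQ. 2 * \<i> * (1/(1 + x^2)))"
    by (rule arg_cong[where f = sum_mset], rule image_mset_cong) (use RQ_mem id2 in auto)
  also have "\<dots> = 2 * \<i> * W" by (simp add: W_def sum_mset_distrib_left)
  finally have sq: "(\<Sum>x\<in>#RQ. 1/(-\<i> - x)) = \<i> * W" by simp
  have "cnj W = (\<Sum>x\<in>#RQ. cnj (1/(1 + x^2)))" unfolding W_def by (rule cnj_sum_mset)
  also have "\<dots> = (\<Sum>x\<in>#RQ. 1/(1 + (cnj x)^2))" by simp
  also have "\<dots> = (\<Sum>x\<in>#image_mset cnj RQ. 1/(1 + x^2))" by (simp only: sum_mset_image)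
  also have "\<dots> = W" by (simp only: RQ_cnj W_def)
  finally have "Im W = 0" by (metis Reals_cnj_iff complex_is_Real_iff)
  then show ?thesis using sq by simp
qed

end

abbreviation ee :: "real \<Rightarrow> complex" where "ee \<xi> \<equiv> exp (- (\<i> * complex_of_real \<xi>))"

lemma ee_pi2: "ee (pi/2) = -\<i>"
proof -
  have "- (\<i> * complex_of_real (pi/2)) = \<i> * complex_of_real (-(pi/2))" by simp
  then have "ee (pi/2) = cis (-(pi/2))" by (simp only: cis_conv_exp)
  also have "\<dots> = -\<i>" by (simp add: complex_eq_iff)
  finally show ?thesis .
qed

lemma ee_norm: "cmod (ee \<xi>) = 1"
proof -
  have "- (\<i> * complex_of_real \<xi>) = \<i> * complex_of_real (-\<xi>)" by simp
  then show ?thesis by (simp only: norm_exp_i_times)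
qed

lemma ee_deriv: "(ee has_vector_derivative (- \<i> * ee (pi/2))) (at (pi/2))"
proof -
  have "((\<lambda>z. exp (- (\<i> * z))) has_field_derivative (exp (- (\<i> * of_real (pi/2))) * (- \<i>))) (at (of_real (pi/2)))"
    by (auto intro!: derivative_eq_intros)
  then have "((\<lambda>x. exp (- (\<i> * of_real x))) has_vector_derivative (exp (- (\<i> * of_real (pi/2))) * (- \<i>))) (at (pi/2))"
    by (rule has_vector_derivative_real_field)
  then show ?thesis by (simp add: mult.commute)
qed

context cor
begin

definition Hd where
  "Hd = (poly (pderiv P) (-\<i>) * poly Q (-\<i>) - poly P (-\<i>) * poly (pderiv Q) (-\<i>)) / (poly Q (-\<i>) * poly Q (-\<i>))"

lemma H_deriv: "(H has_field_derivative Hd) (at (-\<i>))"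
proof -
  have "((\<lambda>z. poly P z / poly Q z) has_field_derivative Hd) (at (-\<i>))"
    unfolding Hd_def by (rule DERIV_divide[OF poly_DERIV poly_DERIV Qmi])
  moreover have "H = (\<lambda>z. poly P z / poly Q z)" by (simp add: fun_eq_iff Hdef)
  ultimately show ?thesis by simp
qed

lemma M_deriv: "((\<lambda>\<xi>. H (ee \<xi>)) has_vector_derivative (- Hd)) (at (pi/2))"
proof -
  have "((H \<circ> ee) has_vector_derivative ((- \<i> * ee (pi/2)) * Hd)) (at (pi/2))"
    by (rule field_vector_diff_chain_at[OF ee_deriv]) (subst ee_pi2, rule H_deriv)
  then show ?thesis unfolding ee_pi2 o_def by simp
qed

lemma Hd_real: "Im Hd = 0"
proof -
  have cont: "isCont (\<lambda>\<xi>. poly Q (ee \<xi>)) (pi/2)" by (intro continuous_intros)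
  have c: "poly Q (ee (pi/2)) \<noteq> 0" unfolding ee_pi2 by (rule Qmi)
  have eva: "eventually (\<lambda>\<xi>. poly Q (ee \<xi>) \<noteq> 0) (at (pi/2))"
    by (rule tendsto_imp_eventually_ne[OF cont[unfolded isCont_def] c])
  have ev: "eventually (\<lambda>\<xi>. poly Q (ee \<xi>) \<noteq> 0) (nhds (pi/2))"
    unfolding eventually_nhds_conv_at using eva c by blast
  have ev2: "eventually (\<lambda>\<xi>. Im (H (ee \<xi>)) = 0) (nhds (pi/2))"
    using ev
  proof (rule eventually_mono)
    fix \<xi> assume "poly Q (ee \<xi>) \<noteq> 0"
    then have "H (ee \<xi>) \<in> \<real>" by (rule real_circle[OF ee_norm])
    then show "Im (H (ee \<xi>)) = 0" by (simp add: complex_is_Real_iff)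
  qed
  have "((\<lambda>\<xi>. H (ee \<xi>)) has_derivative (\<lambda>x. x *\<^sub>R (- Hd))) (at (pi/2))"
    using M_deriv by (simp add: has_vector_derivative_def)
  then have "((\<lambda>\<xi>. Im (H (ee \<xi>))) has_derivative (\<lambda>x. Im (x *\<^sub>R (- Hd)))) (at (pi/2))"
    by (rule has_derivative_Im)
  moreover have "(\<lambda>x. Im (x *\<^sub>R (- Hd))) = (\<lambda>x. Im (- Hd) * x)" by (simp add: fun_eq_iff)
  ultimately have "((\<lambda>\<xi>. Im (H (ee \<xi>))) has_derivative (\<lambda>x. Im (- Hd) * x)) (at (pi/2))"
    by (simp only:)
  then have d1: "((\<lambda>\<xi>. Im (H (ee \<xi>))) has_field_derivative (Im (- Hd))) (at (pi/2))"
    unfolding has_field_derivative_def .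
  have "((\<lambda>\<xi>. Im (H (ee \<xi>))) has_field_derivative (Im (- Hd))) (at (pi/2)) \<longleftrightarrow>
        ((\<lambda>\<xi>. 0::real) has_field_derivative (Im (- Hd))) (at (pi/2))"
    by (rule DERIV_cong_ev) (use ev2 in auto)
  then have "((\<lambda>\<xi>. 0::real) has_field_derivative (Im (- Hd))) (at (pi/2))" using d1 by simp
  then have "Im (- Hd) = 0" using DERIV_const DERIV_unique by blast
  then show ?thesis by simp
qed

end

context cor
begin

lemma Hd_eq: "Hd = (of_real h - 1) * ((\<Sum>x\<in>#R. 1/(-\<i> - x)) - (\<Sum>x\<in>#RQ. 1/(-\<i> - x)))"
proof -
  define SD where "SD = (\<Sum>x\<in>#R. 1/(-\<i> - x))"
  define SQ where "SQ = (\<Sum>x\<in>#RQ. 1/(-\<i> - x))"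
  define d where "d = poly Dp (-\<i>)"
  define qq where "qq = poly Q (-\<i>)"
  have qq0: "qq \<noteq> 0" using Qmi by (simp add: qq_def)
  have dD: "poly (pderiv Dp) (-\<i>) = d * SD" using logderiv_complex[OF Dz0] by (simp add: R_def SD_def d_def)
  have dQ: "poly (pderiv Q) (-\<i>) = qq * SQ" using logderiv_complex[OF Qmi] by (simp add: RQ_def SQ_def qq_def)
  have PD: "P = Dp + Q" by (simp add: Dp_def)
  have pP: "poly P (-\<i>) = d + qq" unfolding PD by (simp add: d_def qq_def)
  have pdP: "poly (pderiv P) (-\<i>) = d * SD + qq * SQ" unfolding PD by (simp add: pderiv_add dD dQ)
  have "Hd = ((d * SD + qq * SQ) * qq - (d + qq) * (qq * SQ)) / (qq * qq)"
    unfolding Hd_def pdP pP dQ qq_def[symmetric] ..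
  also have "(d * SD + qq * SQ) * qq - (d + qq) * (qq * SQ) = (d * (SD - SQ)) * qq"
    by (simp add: algebra_simps)
  also have "(d * (SD - SQ)) * qq / (qq * qq) = (d / qq) * (SD - SQ)"
    using qq0 by (simp add: field_simps)
  also have "d / qq = of_real h - 1"
  proof -
    have "poly P (-\<i>) / qq = of_real h" using h_real by (simp add: Hdef qq_def)
    then have "(d + qq) / qq = of_real h" using pP by simp
    then show ?thesis using qq0 by (simp add: add_divide_distrib eq_diff_eq)
  qed
  finally show ?thesis by (simp add: SD_def SQ_def)
qed

lemma final:
  "((\<lambda>\<xi>. H (ee \<xi>)) has_vector_derivative
     (- complex_of_real (2 - sqrt 2 * sgn (Re (H \<i>))) * (of_nat m + S))) (at (pi/2))"
proof -
  define T where "T = (\<Sum>x\<in>#R. 1/(-\<i> - x)) - (\<Sum>x\<in>#RQ. 1/(-\<i> - x))"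
  have HdT: "Hd = (of_real h - 1) * T" using Hd_eq by (simp add: T_def)
  have "Im Hd = (h - 1) * Im T" unfolding HdT by simp
  then have "(h - 1) * Im T = 0" using Hd_real by simp
  then have ImT: "Im T = 0" using h_ne1 by simp
  have ReT: "Re T = - 2 * of_nat m - 2 * Re S"
    using SQ by (simp add: T_def SD)
  have T_eq: "T = - 2 * of_nat m - 2 * S"
    using ImT ReT S_real by (simp add: complex_eq_iff)
  have coef: "- complex_of_real (2 - sqrt 2 * sgn (Re (H \<i>))) = 2 * (of_real h - 1)"
  proof -
    have "sqrt 2 * sgn h = 2 * h" using h_val by (simp add: algebra_simps)
    then show ?thesis unfolding sgn_eq by simp
  qed
  have "- Hd = - complex_of_real (2 - sqrt 2 * sgn (Re (H \<i>))) * (of_nat m + S)"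
    unfolding coef HdT T_eq by (simp add: algebra_simps)
  then show ?thesis using M_deriv by simp
qed

end

theorem corollary2:
  fixes p q :: "real poly" and m :: nat and L :: "complex multiset"
  assumes "zero_sym_filter p q"
    and "coprime p q"
    and "poly q 1 \<noteq> 0" and "rat_eval p q 1 = 1"
    and "m \<ge> 1"
    and "order (-1) p = 2 * m"
    and "is_param_multiset p q L"
  shows "((\<lambda>\<xi>::real. rat_eval p q (exp (- (\<i> * complex_of_real \<xi>)))) has_vector_derivative
           (- complex_of_real (2 - sqrt 2 * sgn (Re (rat_eval p q \<i>)))
              * (of_nat m + (\<Sum>l\<in>#L. 1 / eta l)))) (at (pi / 2))"
proof -
  interpret cor p q m L using assms by (simp add: cor_def)
  show ?thesis using final unfolding S_def .
qed

end
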